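(* Let $M=\{1,\dots,m\}$ with $m\ge2$, and $t_I=\sum_{i\in I}t_i$. The rational function $$\sum_{\substack{I\sqcup J=M\\ I,J\neq\emptyset}} t_I^{|I|-2}t_J^{|J|-2}-2t_M^{m-3}\left(\frac1{t_1}+\dots+\frac1{t_m}\right)$$ (sum over ordered pairs of disjoint nonempty subsets with union $M$) is a symmetric polynomial in $t_1,\dots,t_m$ which depends only on $t_M=t_1+\dots+t_m$, i.e. it equals $F(t_1+\dots+t_m)$ for some one-variable polynomial $F$. *)

theory Defs
  imports Complex_Main "HOL-Computational_Algebra.Polynomial"
begin

definition tsum :: "(nat \<Rightarrow> real) \<Rightarrow> nat set \<Rightarrow> real" where
  "tsum t I = (\<Sum>i\<in>I. t i)"

end

theory Submission imports Defs begin

definition fB :: "(nat \<Rightarrow> real) \<Rightarrow> nat set \<Rightarrow> real" where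
  "fB t B = tsum t B powi (int (card B) - 2)"

definition aA :: "(nat \<Rightarrow> real) \<Rightarrow> nat set \<Rightarrow> real \<Rightarrow> real" where
  "aA t A x = (if A = {} then 1 else x * (x + tsum t A) ^ (card A - 1))"

lemma tsum_remove: "finite A \<Longrightarrow> a \<in> A \<Longrightarrow> tsum t A = t a + tsum t (A - {a})"
  unfolding tsum_def by (simp add: sum.remove)

lemma deriv_aA:
  assumes "finite A"
  shows "(aA t A has_real_derivative (\<Sum>a\<in>A. aA t (A - {a}) (x + t a))) (at x)"
proof (cases "A = {}")
  case True
  have "aA t {} = (\<lambda>x. 1)" by (simp add: fun_eq_iff aA_def)
  then show ?thesis using True by simp
next
  case False
  define c where "c = tsum t A"
  define k where "k = card A"
  have k1: "k \<ge> 1" using False assms by (simp add: k_def Suc_le_eq card_gt_0_iff)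
  have fe: "aA t A = (\<lambda>x. x * (x + c) ^ (k - 1))" using False by (simp add: aA_def fun_eq_iff c_def k_def)
  have D: "((\<lambda>x. x * (x + c) ^ (k - 1)) has_real_derivative
      ((x + c) ^ (k - 1) + x * (real (k - 1) * (x + c) ^ (k - 2)))) (at x)"
    by (auto intro!: derivative_eq_intros simp: algebra_simps numeral_2_eq_2)
  have S: "(\<Sum>a\<in>A. aA t (A - {a}) (x + t a)) = (x + c) ^ (k - 1) + x * (real (k - 1) * (x + c) ^ (k - 2))"
  proof (cases "k = 1")
    case True
    then obtain b where "A = {b}" using k_def by (metis card_1_singletonE)
    then show ?thesis using True by (simp add: aA_def)
  next
    case False
    then have k2: "k \<ge> 2" using k1 by simp
    have "\<And>a. a \<in> A \<Longrightarrow> aA t (A - {a}) (x + t a) = (x + t a) * (x + c) ^ (k - 2)"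
    proof -
      fix a assume a: "a \<in> A"
      have "card (A - {a}) = k - 1" using a assms k_def by simp
      then have ne: "A - {a} \<noteq> {}" using k2 by (metis card.empty diff_is_0_eq not_one_le_zero one_le_numeral Suc_1 diff_Suc_1 not_less_eq_eq zero_less_diff not_numeral_le_zero le_trans)
      have "card (A - {a}) - 1 = k - 2" using a assms k_def by simp
      moreover have "x + t a + tsum t (A - {a}) = x + c" using tsum_remove[OF assms a, of t] c_def by simp
      ultimately show "aA t (A - {a}) (x + t a) = (x + t a) * (x + c) ^ (k - 2)"
        using ne by (simp add: aA_def add.assoc)
    qed
    then have "(\<Sum>a\<in>A. aA t (A - {a}) (x + t a)) = (\<Sum>a\<in>A. (x + t a)) * (x + c) ^ (k - 2)"
      by (simp add: sum_distrib_right)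
    also have "(\<Sum>a\<in>A. (x + t a)) = real k * x + c"
      by (simp add: sum.distrib k_def c_def tsum_def)
    also have "(x + c) ^ (k - 1) = (x + c) * (x + c) ^ (k - 2)"
      using k2 by (metis Suc_diff_Suc Suc_1 Suc_le_lessD power_Suc diff_Suc_1)
    ultimately show ?thesis using k2 by (simp add: algebra_simps of_nat_diff)
  qed
  show ?thesis unfolding fe S using D .
qed

definition SS :: "nat set \<Rightarrow> nat set set" where
  "SS M = {A. A \<subseteq> M \<and> A \<noteq> M}"

lemma finite_SS: "finite M \<Longrightarrow> finite (SS M)"
  unfolding SS_def by (rule finite_subset[of _ "Pow M"]) auto

definition GG :: "(nat \<Rightarrow> real) \<Rightarrow> nat set \<Rightarrow> real \<Rightarrow> real" where
  "GG t M x = (\<Sum>A\<in>SS M. aA t A x * fB t (M - A))"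

lemma reindex_SS:
  assumes "finite M"
  shows "(\<Sum>A\<in>SS M. \<Sum>a\<in>A. h (A - {a}) a (M - A)) =
         (\<Sum>a\<in>M. \<Sum>A'\<in>SS (M - {a}). h A' a ((M - {a}) - A'))"
proof -
  have fin: "finite (SS M)" using finite_SS[OF assms] .
  have "(\<Sum>A\<in>SS M. \<Sum>a\<in>A. h (A - {a}) a (M - A)) =
        (\<Sum>A\<in>SS M. \<Sum>a\<in>M. if a \<in> A then h (A - {a}) a (M - A) else 0)"
  proof (rule sum.cong[OF refl])
    fix A assume "A \<in> SS M"
    then have "A \<subseteq> M" by (simp add: SS_def)
    then have "A = M \<inter> A" by auto
    then show "(\<Sum>a\<in>A. h (A - {a}) a (M - A)) = (\<Sum>a\<in>M. if a \<in> A then h (A - {a}) a (M - A) else 0)"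
      using sum.inter_restrict[OF assms, of "\<lambda>a. h (A - {a}) a (M - A)" A] by simp
  qed
  also have "\<dots> = (\<Sum>a\<in>M. \<Sum>A\<in>SS M. if a \<in> A then h (A - {a}) a (M - A) else 0)"
    by (rule sum.swap)
  also have "\<dots> = (\<Sum>a\<in>M. \<Sum>A\<in>{A\<in>SS M. a \<in> A}. h (A - {a}) a (M - A))"
    by (rule sum.cong[OF refl], rule sum.inter_filter[OF fin, symmetric])
  also have "\<dots> = (\<Sum>a\<in>M. \<Sum>A'\<in>SS (M - {a}). h A' a ((M - {a}) - A'))"
  proof (rule sum.cong[OF refl])
    fix a assume a: "a \<in> M"
    have bij: "bij_betw (insert a) (SS (M - {a})) {A\<in>SS M. a \<in> A}"
    proof (rule bij_betw_imageI)
      show "inj_on (insert a) (SS (M - {a}))"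
        unfolding SS_def inj_on_def by blast
      show "insert a ` SS (M - {a}) = {A \<in> SS M. a \<in> A}"
      proof
        show "insert a ` SS (M - {a}) \<subseteq> {A \<in> SS M. a \<in> A}"
          using a unfolding SS_def by blast
        show "{A \<in> SS M. a \<in> A} \<subseteq> insert a ` SS (M - {a})"
        proof
          fix A assume "A \<in> {A \<in> SS M. a \<in> A}"
          then have "A - {a} \<in> SS (M - {a})" "A = insert a (A - {a})"
            unfolding SS_def by blast+
          then show "A \<in> insert a ` SS (M - {a})" by blast
        qed
      qed
    qed
    have "(\<Sum>A\<in>{A\<in>SS M. a \<in> A}. h (A - {a}) a (M - A)) =
          (\<Sum>A'\<in>SS (M - {a}). h (insert a A' - {a}) a (M - insert a A'))"
      by (rule sum.reindex_bij_betw[OF bij, symmetric])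
    also have "\<dots> = (\<Sum>A'\<in>SS (M - {a}). h A' a ((M - {a}) - A'))"
    proof (rule sum.cong[OF refl])
      fix A' assume "A' \<in> SS (M - {a})"
      then have "a \<notin> A'" by (auto simp: SS_def)
      then have "insert a A' - {a} = A'" "M - insert a A' = (M - {a}) - A'" by auto
      then show "h (insert a A' - {a}) a (M - insert a A') = h A' a ((M - {a}) - A')" by simp
    qed
    finally show "(\<Sum>A\<in>{A\<in>SS M. a \<in> A}. h (A - {a}) a (M - A)) = (\<Sum>A'\<in>SS (M - {a}). h A' a ((M - {a}) - A'))" .
  qed
  finally show ?thesis .
qed

lemma deriv_GG:
  assumes "finite M"
  shows "(GG t M has_real_derivative (\<Sum>a\<in>M. GG t (M - {a}) (x + t a))) (at x)"
proof -
  have fe: "GG t M = (\<lambda>x. \<Sum>A\<in>SS M. aA t A x * fB t (M - A))"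
    by (simp add: fun_eq_iff GG_def)
  have D: "((\<lambda>x. \<Sum>A\<in>SS M. aA t A x * fB t (M - A)) has_real_derivative
      (\<Sum>A\<in>SS M. (\<Sum>a\<in>A. aA t (A - {a}) (x + t a)) * fB t (M - A))) (at x)"
  proof (rule DERIV_sum)
    fix A assume "A \<in> SS M"
    then have "finite A" using assms by (auto simp: SS_def intro: finite_subset)
    then show "((\<lambda>x. aA t A x * fB t (M - A)) has_real_derivative
      (\<Sum>a\<in>A. aA t (A - {a}) (x + t a)) * fB t (M - A)) (at x)"
      by (intro DERIV_cmult_right deriv_aA)
  qed
  have "(\<Sum>A\<in>SS M. (\<Sum>a\<in>A. aA t (A - {a}) (x + t a)) * fB t (M - A)) =
        (\<Sum>A\<in>SS M. \<Sum>a\<in>A. aA t (A - {a}) (x + t a) * fB t (M - A))"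
    by (simp add: sum_distrib_right)
  also have "\<dots> = (\<Sum>a\<in>M. \<Sum>A'\<in>SS (M - {a}). aA t A' (x + t a) * fB t ((M - {a}) - A'))"
    using reindex_SS[OF assms, of "\<lambda>A' a B. aA t A' (x + t a) * fB t B"] by simp
  also have "\<dots> = (\<Sum>a\<in>M. GG t (M - {a}) (x + t a))"
    by (simp add: GG_def)
  finally show ?thesis using D fe by simp
qed

definition TT :: "(nat \<Rightarrow> real) \<Rightarrow> nat set \<Rightarrow> real" where
  "TT t M = (\<Sum>i\<in>M. 1 / t i)"

definition gg :: "(nat \<Rightarrow> real) \<Rightarrow> nat set \<Rightarrow> real \<Rightarrow> real" where
  "gg t M x = (if card M = 1 then 1 / tsum t M else
     (x + tsum t M) ^ (card M - 2) * (1 + x * TT t M)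
     - real ((card M - 1) choose 2) * x * (x + tsum t M) ^ (card M - 3))"

lemma TT_remove: "finite A \<Longrightarrow> a \<in> A \<Longrightarrow> TT t (A - {a}) = TT t A - 1 / t a"
  unfolding TT_def by (simp add: sum_diff1)

lemma tsum_remove': "finite A \<Longrightarrow> a \<in> A \<Longrightarrow> tsum t (A - {a}) = tsum t A - t a"
  unfolding tsum_def by (simp add: sum_diff1)

lemma key_sum:
  assumes "finite M" "\<forall>i\<in>M. t i \<noteq> 0"
  shows "(\<Sum>a\<in>M. (x + t a) * (TT t M - 1 / t a)) =
         (real (card M) - 1) * x * TT t M + tsum t M * TT t M - real (card M)"
proof -
  have "(\<Sum>a\<in>M. (x + t a) * (TT t M - 1 / t a)) =
        (\<Sum>a\<in>M. x * TT t M - x * (1 / t a) + t a * TT t M - 1)"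
    using assms(2) by (intro sum.cong) (auto simp: field_simps)
  also have "\<dots> = real (card M) * x * TT t M - x * TT t M + tsum t M * TT t M - real (card M)"
  proof -
    have "(\<Sum>a\<in>M. x / t a) = x * TT t M" by (simp add: TT_def sum_distrib_left)
    then show ?thesis
    by (simp add: sum.distrib sum_subtractf sum_distrib_left[symmetric] sum_distrib_right[symmetric]
         TT_def tsum_def)
  qed
  finally show ?thesis by (simp add: algebra_simps)
qed

lemma deriv_gg:
  assumes M: "finite M" "card M \<ge> 2" and nz: "\<forall>i\<in>M. t i \<noteq> 0"
  shows "(gg t M has_real_derivative (\<Sum>a\<in>M. gg t (M - {a}) (x + t a))) (at x)"
proof -
  define n where "n = card M"
  define s where "s = tsum t M"
  define T where "T = TT t M"
  have rem: "\<And>a y. a \<in> M \<Longrightarrow> tsum t (M - {a}) = s - t a \<and> TT t (M - {a}) = T - 1 / t a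
      \<and> card (M - {a}) = n - 1"
    using M by (simp add: tsum_remove' TT_remove s_def T_def n_def)
  have "n = 2 \<or> n = 3 \<or> (\<exists>j. n = j + 4)" using M(2) n_def by presburger
  then consider "n = 2" | "n = 3" | j where "n = j + 4" by blast
  then show ?thesis
  proof cases
    case 1
    then obtain p q where pq: "M = {p, q}" "p \<noteq> q" using n_def by (metis card_2_iff)
    have fe: "gg t M = (\<lambda>x. 1 + x * T)" using 1 n_def by (simp add: fun_eq_iff gg_def T_def)
    have "(\<Sum>a\<in>M. gg t (M - {a}) (x + t a)) = 1 / t q + 1 / t p"
      using pq by (simp add: gg_def tsum_def insert_Diff_if)
    also have "\<dots> = T" using pq by (simp add: T_def TT_def)
    finally have e: "(\<Sum>a\<in>M. gg t (M - {a}) (x + t a)) = T" .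
    show ?thesis unfolding fe e by (auto intro!: derivative_eq_intros)
  next
    case 2
    have fe: "gg t M = (\<lambda>x. (x + s) * (1 + x * T) - x)" using 2 n_def
      by (simp add: fun_eq_iff gg_def T_def s_def)
    have D: "((\<lambda>x. (x + s) * (1 + x * T) - x) has_real_derivative x * T + (x + s) * T) (at x)"
      by (auto intro!: derivative_eq_intros simp: algebra_simps)
    have "(\<Sum>a\<in>M. gg t (M - {a}) (x + t a)) = (\<Sum>a\<in>M. 1 + (x + t a) * (T - 1 / t a))"
      using 2 rem by (intro sum.cong) (auto simp: gg_def)
    also have "\<dots> = real n + ((real n - 1) * x * T + s * T - real n)"
      using key_sum[OF M(1) nz, of x] by (simp add: sum.distrib n_def s_def T_def)
    also have "\<dots> = x * T + (x + s) * T" using 2 by (simp add: algebra_simps)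
    finally show ?thesis unfolding fe using D by simp
  next
    case 3
    have fe: "gg t M = (\<lambda>x. (x + s) ^ (j + 2) * (1 + x * T) - real ((j + 3) choose 2) * x * (x + s) ^ (j + 1))"
      using 3 n_def by (simp add: fun_eq_iff gg_def T_def s_def add.commute[of 3 j])
    define C3 where "C3 = real ((j + 3) choose 2)"
    define C2 where "C2 = real ((j + 2) choose 2)"
    have D: "((\<lambda>x. (x + s) ^ (j + 2) * (1 + x * T) - C3 * x * (x + s) ^ (j + 1)) has_real_derivative
       (x + s) ^ j * ((real j + 2) * (x + s) * (1 + x * T) + (x + s) ^ 2 * T - C3 * ((x + s) + (real j + 1) * x))) (at x)"
    proof -
      have D0: "((\<lambda>x. (x + s) ^ (j + 2) * (1 + x * T) - C3 * x * (x + s) ^ (j + 1)) has_real_derivative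
        (real (j + 2) * (x + s) ^ (j + 2 - 1) * (1 + 0)) * (1 + x * T) + (x + s) ^ (j + 2) * (0 + (1 * T + x * 0))
        - (C3 * 1 * (x + s) ^ (j + 1) + C3 * x * (real (j + 1) * (x + s) ^ (j + 1 - 1) * (1 + 0)))) (at x)"
        by (intro derivative_eq_intros) auto
      have "(real (j + 2) * (x + s) ^ (j + 2 - 1) * (1 + 0)) * (1 + x * T) + (x + s) ^ (j + 2) * (0 + (1 * T + x * 0))
        - (C3 * 1 * (x + s) ^ (j + 1) + C3 * x * (real (j + 1) * (x + s) ^ (j + 1 - 1) * (1 + 0)))
        = (x + s) ^ j * ((real j + 2) * (x + s) * (1 + x * T) + (x + s) ^ 2 * T - C3 * ((x + s) + (real j + 1) * x))"
        by (simp add: algebra_simps power2_eq_square)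
      then show ?thesis using D0 by simp
    qed
    have "(\<Sum>a\<in>M. gg t (M - {a}) (x + t a)) =
       (\<Sum>a\<in>M. (x + s) ^ (j + 1) * (1 + (x + t a) * (T - 1 / t a)) - C2 * ((x + t a) * (x + s) ^ j))"
      using 3 rem by (intro sum.cong) (auto simp: gg_def C2_def)
    also have "\<dots> = (x + s) ^ (j + 1) * (real n + ((real n - 1) * x * T + s * T - real n))
                   - C2 * ((real n * x + s) * (x + s) ^ j)"
      using key_sum[OF M(1) nz, of x]
      by (simp add: sum_subtractf sum.distrib sum_distrib_left[symmetric] sum_distrib_right[symmetric]
          n_def s_def T_def tsum_def)
    also have "\<dots> = (x + s) ^ j * ((real j + 2) * (x + s) * (1 + x * T) + (x + s) ^ 2 * T - C3 * ((x + s) + (real j + 1) * x))"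
    proof -
      have c3: "C3 = (real j + 3) * (real j + 2) / 2" unfolding C3_def choose_two
        by (simp add: real_of_nat_div algebra_simps)
      have c2: "C2 = (real j + 2) * (real j + 1) / 2" unfolding C2_def choose_two
        by (simp add: real_of_nat_div algebra_simps)
      have inner: "(x + s) * (real n + ((real n - 1) * x * T + s * T - real n)) - C2 * (real n * x + s)
          = (real j + 2) * (x + s) * (1 + x * T) + (x + s) ^ 2 * T - C3 * ((x + s) + (real j + 1) * x)"
        unfolding c3 c2 3 by (simp add: field_simps power2_eq_square)
      have "(x + s) ^ (j + 1) * (real n + ((real n - 1) * x * T + s * T - real n))
                   - C2 * ((real n * x + s) * (x + s) ^ j)
          = (x + s) ^ j * ((x + s) * (real n + ((real n - 1) * x * T + s * T - real n)) - C2 * (real n * x + s))"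
        by (simp add: algebra_simps)
      then show ?thesis using inner by simp
    qed
    finally show ?thesis unfolding fe C3_def[symmetric] using D by simp
  qed
qed

lemma GG_eq_gg:
  "finite M \<Longrightarrow> card M = Suc n \<Longrightarrow> \<forall>i\<in>M. t i \<noteq> 0 \<Longrightarrow> GG t M x = gg t M x"
proof (induction n arbitrary: M x)
  case 0
  then have "card M = 1" by simp
  then obtain b where b: "M = {b}" by (rule card_1_singletonE)
  have "SS M = {{}}" unfolding b SS_def by auto
  then show ?case using b by (simp add: GG_def gg_def aA_def fB_def tsum_def power_int_minus divide_inverse)
next
  case (Suc n)
  have M: "finite M" "card M \<ge> 2" "\<forall>i\<in>M. t i \<noteq> 0" using Suc.prems by auto
  define D where "D = (\<lambda>x. GG t M x - gg t M x)"
  have "\<forall>y. DERIV D y :> 0"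
  proof
    fix y
    have "DERIV D y :> (\<Sum>a\<in>M. GG t (M - {a}) (y + t a)) - (\<Sum>a\<in>M. gg t (M - {a}) (y + t a))"
      unfolding D_def using deriv_GG[OF M(1)] deriv_gg[OF M] by (intro DERIV_diff)
    moreover have "(\<Sum>a\<in>M. GG t (M - {a}) (y + t a)) = (\<Sum>a\<in>M. gg t (M - {a}) (y + t a))"
    proof (rule sum.cong[OF refl])
      fix a assume a: "a \<in> M"
      show "GG t (M - {a}) (y + t a) = gg t (M - {a}) (y + t a)"
      proof (rule Suc.IH)
        show "finite (M - {a})" using M(1) by simp
        show "card (M - {a}) = Suc n" using a M(1) Suc.prems(2) by simp
        show "\<forall>i\<in>M - {a}. t i \<noteq> 0" using M(3) by simp
      qed
    qed
    ultimately show "DERIV D y :> 0" by simp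
  qed
  then have "D x = D 0" by (rule DERIV_isconst_all)
  moreover have "D 0 = 0"
  proof -
    have "GG t M 0 = (\<Sum>A\<in>SS M. if A = {} then fB t M else 0)"
      unfolding GG_def by (intro sum.cong) (auto simp: aA_def)
    also have "\<dots> = fB t M"
    proof -
      have "{} \<in> SS M" using M(2) by (auto simp: SS_def)
      then show ?thesis using finite_SS[OF M(1)] by (simp add: sum.delta)
    qed
    also have "\<dots> = tsum t M ^ (card M - 2)"
    proof -
      have e: "int (card M) - 2 = int (card M - 2)" using M(2) by simp
      show ?thesis unfolding fB_def e power_int_of_nat ..
    qed
    finally show ?thesis using M(2) by (simp add: D_def gg_def)
  qed
  ultimately show ?case by (simp add: D_def)
qed

lemma fB_insert:
  assumes "finite A" "m \<notin> A" "t m \<noteq> 0"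
  shows "fB t (insert m A) = aA t A (t m) / t m"
proof (cases "A = {}")
  case True
  then show ?thesis using assms by (simp add: fB_def aA_def tsum_def power_int_minus divide_inverse)
next
  case False
  then have c: "card A \<ge> 1" using assms(1) by (simp add: Suc_le_eq card_gt_0_iff)
  have e: "int (card (insert m A)) - 2 = int (card A - 1)" using assms c by simp
  have ts: "tsum t (insert m A) = t m + tsum t A" using assms by (simp add: tsum_def)
  show ?thesis unfolding fB_def e power_int_of_nat ts using False assms(3) by (simp add: aA_def)
qed

lemma split_sum:
  assumes "finite M" "m \<in> M"
  shows "(\<Sum>I\<in>{I. I \<subseteq> M \<and> I \<noteq> {} \<and> I \<noteq> M}. fB t I * fB t (M - I))
       = 2 * (\<Sum>A\<in>SS (M - {m}). fB t (insert m A) * fB t ((M - {m}) - A))"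
proof -
  define Q where "Q = {I. I \<subseteq> M \<and> I \<noteq> {} \<and> I \<noteq> M}"
  define h where "h = (\<lambda>I. fB t I * fB t (M - I))"
  have finQ: "finite Q" unfolding Q_def by (rule finite_subset[of _ "Pow M"]) (use assms in auto)
  have QU: "Q = {I\<in>Q. m \<in> I} \<union> {I\<in>Q. m \<notin> I}" by auto
  have "sum h Q = sum h {I\<in>Q. m \<in> I} + sum h {I\<in>Q. m \<notin> I}"
    by (subst QU, rule sum.union_disjoint) (use finQ in auto)
  moreover have "sum h {I\<in>Q. m \<notin> I} = sum h {I\<in>Q. m \<in> I}"
  proof -
    have bij: "bij_betw (\<lambda>I. M - I) {I\<in>Q. m \<in> I} {I\<in>Q. m \<notin> I}"
    proof (rule bij_betw_imageI)
      show "inj_on (\<lambda>I. M - I) {I\<in>Q. m \<in> I}" unfolding inj_on_def Q_def by blast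
      show "(\<lambda>I. M - I) ` {I\<in>Q. m \<in> I} = {I\<in>Q. m \<notin> I}"
      proof
        show "(\<lambda>I. M - I) ` {I\<in>Q. m \<in> I} \<subseteq> {I\<in>Q. m \<notin> I}" unfolding Q_def by blast
        show "{I\<in>Q. m \<notin> I} \<subseteq> (\<lambda>I. M - I) ` {I\<in>Q. m \<in> I}"
        proof
          fix I assume I: "I \<in> {I\<in>Q. m \<notin> I}"
          then have "M - I \<in> {I\<in>Q. m \<in> I}" "I = M - (M - I)" using assms unfolding Q_def by blast+
          then show "I \<in> (\<lambda>I. M - I) ` {I\<in>Q. m \<in> I}" by blast
        qed
      qed
    qed
    have "sum h {I\<in>Q. m \<notin> I} = sum (\<lambda>I. h (M - I)) {I\<in>Q. m \<in> I}"
      by (rule sum.reindex_bij_betw[OF bij, symmetric])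
    also have "\<dots> = sum h {I\<in>Q. m \<in> I}"
    proof (rule sum.cong[OF refl])
      fix I assume "I \<in> {I\<in>Q. m \<in> I}"
      then have "M - (M - I) = I" unfolding Q_def by blast
      then show "h (M - I) = h I" unfolding h_def by simp
    qed
    finally show ?thesis .
  qed
  moreover have "sum h {I\<in>Q. m \<in> I} = (\<Sum>A\<in>SS (M - {m}). fB t (insert m A) * fB t ((M - {m}) - A))"
  proof -
    have bij: "bij_betw (insert m) (SS (M - {m})) {I\<in>Q. m \<in> I}"
    proof (rule bij_betw_imageI)
      show "inj_on (insert m) (SS (M - {m}))" unfolding inj_on_def SS_def by blast
      show "insert m ` SS (M - {m}) = {I\<in>Q. m \<in> I}"
      proof
        show "insert m ` SS (M - {m}) \<subseteq> {I\<in>Q. m \<in> I}" using assms unfolding Q_def SS_def by blast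
        show "{I\<in>Q. m \<in> I} \<subseteq> insert m ` SS (M - {m})"
        proof
          fix I assume I: "I \<in> {I\<in>Q. m \<in> I}"
          then have "I - {m} \<in> SS (M - {m})" "I = insert m (I - {m})" unfolding Q_def SS_def by blast+
          then show "I \<in> insert m ` SS (M - {m})" by blast
        qed
      qed
    qed
    have "sum h {I\<in>Q. m \<in> I} = sum (\<lambda>A. h (insert m A)) (SS (M - {m}))"
      by (rule sum.reindex_bij_betw[OF bij, symmetric])
    also have "\<dots> = (\<Sum>A\<in>SS (M - {m}). fB t (insert m A) * fB t ((M - {m}) - A))"
    proof (rule sum.cong[OF refl])
      fix A assume "A \<in> SS (M - {m})"
      then have "M - insert m A = (M - {m}) - A" unfolding SS_def by blast
      then show "h (insert m A) = fB t (insert m A) * fB t ((M - {m}) - A)" unfolding h_def by simp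
    qed
    finally show ?thesis .
  qed
  ultimately show ?thesis unfolding Q_def[symmetric] h_def[symmetric] by simp
qed

theorem lemma4p2:
  fixes m :: nat
  assumes "m \<ge> 2"
  shows "\<exists>F :: real poly. \<forall>t :: nat \<Rightarrow> real.
    (\<forall>i\<in>{1..m}. t i \<noteq> 0) \<longrightarrow> tsum t {1..m} \<noteq> 0 \<longrightarrow>
    (\<Sum>I\<in>{I. I \<subseteq> {1..m} \<and> I \<noteq> {} \<and> I \<noteq> {1..m}}.
        tsum t I powi (int (card I) - 2) *
        tsum t ({1..m} - I) powi (int (card ({1..m} - I)) - 2))
      - 2 * tsum t {1..m} powi (int m - 3) * (\<Sum>i\<in>{1..m}. 1 / t i)
    = poly F (tsum t {1..m})"
proof (intro exI allI impI)
  fix t :: "nat \<Rightarrow> real"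
  assume nz: "\<forall>i\<in>{1..m}. t i \<noteq> 0" and s0: "tsum t {1..m} \<noteq> 0"
  define M where "M = {1..m}"
  define M' where "M' = M - {m}"
  define s where "s = tsum t M"
  define T where "T = TT t M"
  define C where "C = real ((m - 2) choose 2)"
  have mM: "m \<in> M" "finite M" using assms by (auto simp: M_def)
  have tm: "t m \<noteq> 0" using nz mM by (simp add: M_def)
  have cM': "card M' = Suc (m - 2)" using assms by (simp add: M'_def M_def)
  have fM': "finite M'" by (simp add: M'_def M_def)
  have nz': "\<forall>i\<in>M'. t i \<noteq> 0" using nz by (simp add: M'_def M_def)
  have sM': "tsum t M' = s - t m" using tsum_remove'[OF mM(2,1)] by (simp add: M'_def s_def)
  have TM': "TT t M' = T - 1 / t m" using TT_remove[OF mM(2,1)] by (simp add: M'_def T_def)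
  have "(\<Sum>I\<in>{I. I \<subseteq> M \<and> I \<noteq> {} \<and> I \<noteq> M}. fB t I * fB t (M - I))
      = 2 * (\<Sum>A\<in>SS M'. fB t (insert m A) * fB t (M' - A))"
    using split_sum[OF mM(2,1)] by (simp add: M'_def)
  also have "\<dots> = 2 * (\<Sum>A\<in>SS M'. aA t A (t m) * fB t (M' - A)) / t m"
  proof -
    have "(\<Sum>A\<in>SS M'. fB t (insert m A) * fB t (M' - A)) = (\<Sum>A\<in>SS M'. aA t A (t m) * fB t (M' - A) / t m)"
    proof (rule sum.cong[OF refl])
      fix A assume "A \<in> SS M'"
      then have "A \<subseteq> M'" by (simp add: SS_def)
      then have "finite A" "m \<notin> A" using fM' by (auto simp: M'_def intro: finite_subset)
      then show "fB t (insert m A) * fB t (M' - A) = aA t A (t m) * fB t (M' - A) / t m"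
        using fB_insert[of A m t] tm by simp
    qed
    then show ?thesis by (simp add: sum_divide_distrib[symmetric])
  qed
  also have "\<dots> = 2 * gg t M' (t m) / t m"
    using GG_eq_gg[OF fM' cM' nz'] by (simp add: GG_def)
  finally have U: "(\<Sum>I\<in>{I. I \<subseteq> M \<and> I \<noteq> {} \<and> I \<noteq> M}. fB t I * fB t (M - I)) = 2 * gg t M' (t m) / t m" .
  have goal: "2 * gg t M' (t m) / t m - 2 * s powi (int m - 3) * T = - 2 * C * s ^ (m - 4)"
  proof (cases "m = 2")
    case True
    then have "M' = {1}" "M = {1, 2}" by (auto simp: M'_def M_def)
    then have g1: "gg t M' (t m) = 1 / t 1" and hT: "T = 1 / t 1 + 1 / t 2" and hs: "s = t 1 + t 2"
      by (simp_all add: gg_def tsum_def T_def TT_def s_def)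
    have n1: "t 1 \<noteq> 0" "t 2 \<noteq> 0" using nz True by auto
    have n3: "t 1 + t 2 \<noteq> 0" using s0 hs by (simp add: s_def M_def)
    have p: "s powi (int m - 3) = 1 / (t 1 + t 2)" using True hs by (simp add: power_int_minus divide_inverse)
    have "2 * (1 / t 1) / t 2 - 2 * (1 / (t 1 + t 2)) * (1 / t 1 + 1 / t 2) = 0"
      using n1 n3 by (simp add: divide_simps)
    then show ?thesis unfolding g1 p hT using True by (simp add: C_def)
  next
    case False
    then have m3: "m \<ge> 3" using assms by simp
    have g: "gg t M' (t m) = s ^ (m - 3) * (1 + t m * (T - 1 / t m)) - C * t m * s ^ (m - 4)"
      using m3 cM' by (simp add: gg_def sM' TM' C_def numeral_eq_Suc)
    have e: "int m - 3 = int (m - 3)" using m3 by simp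
    show ?thesis unfolding g e power_int_of_nat using tm by (simp add: field_simps)
  qed
  show "(\<Sum>I\<in>{I. I \<subseteq> {1..m} \<and> I \<noteq> {} \<and> I \<noteq> {1..m}}.
        tsum t I powi (int (card I) - 2) *
        tsum t ({1..m} - I) powi (int (card ({1..m} - I)) - 2))
      - 2 * tsum t {1..m} powi (int m - 3) * (\<Sum>i\<in>{1..m}. 1 / t i)
    = poly (monom (- 2 * real ((m - 2) choose 2)) (m - 4)) (tsum t {1..m})"
    using U goal unfolding M_def s_def T_def TT_def C_def fB_def by (simp add: poly_monom)
qed

end
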